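(* Let $p$ be even, $V=\{1,\dots,p\}$, and $\tau$ a twin-pairing function on $V$. The number of pdCGs (equivalently, of RCON models for paired data) on $V$ is $$|\mathcal{P}(V)|=2^{p/2}\sum_{i=0}^{p(p-2)/4}\binom{p(p-2)/4}{i}\,2^{\binom{p}{2}-2i}.$$
   Context: A twin-pairing function is a map $\tau:V\to V$ such that $\tau(i)=j$ implies $\tau(j)=i$ and there is a partition $V=L\cup R$, $L\cap R=\emptyset$, with $\tau(L)=R$ (so $|L|=|R|=p/2$). Let $F_V=\{(i,j)\mid i,j\in V,\ i<j\}$ and extend $\tau$ to edges by $\tau(i,j)=(\tau(i),\tau(j))$, endpoints reordered to lie in $F_V$. A coloured graph with vertex set $V$ is a pair $(\mathcal{V},\mathcal{E})$ where $\mathcal{V}$ is a partition of $V$ and $\mathcal{E}$ is a partition of some edge set $E\subseteq F_V$. A colour class is atomic if it has exactly one element and twin-pairing if it is of the form $\{i,\tau(i)\}$ or $\{(i,j),\tau(i,j)\}$ with $(i,j)\neq\tau(i,j)$. A pdCG (coloured graph for paired data) is a coloured graph in which every colour class is atomic or twin-pairing; $\mathcal{P}(V)$ is the set of pdCGs on $V$. Each pdCG $\mathcal{G}$ defines the RCON model of normal distributions on $\mathbb{R}^V$ whose concentration matrix has zero entries for non-edges and equal entries within each colour class, and distinct pdCGs define distinct models. *)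

theory Defs
  imports Main "HOL-Library.Disjoint_Sets"
begin

definition twin_pairing :: "nat set \<Rightarrow> (nat \<Rightarrow> nat) \<Rightarrow> bool" where
  "twin_pairing V \<tau> \<longleftrightarrow>
     (\<forall>i\<in>V. \<tau> i \<in> V \<and> \<tau> (\<tau> i) = i) \<and>
     (\<exists>L R. L \<union> R = V \<and> L \<inter> R = {} \<and> \<tau> ` L = R)"

definition F_V :: "nat set \<Rightarrow> (nat \<times> nat) set" where
  "F_V V = {(i, j). i \<in> V \<and> j \<in> V \<and> i < j}"

definition tau_edge :: "(nat \<Rightarrow> nat) \<Rightarrow> nat \<times> nat \<Rightarrow> nat \<times> nat" where
  "tau_edge \<tau> e = (min (\<tau> (fst e)) (\<tau> (snd e)), max (\<tau> (fst e)) (\<tau> (snd e)))"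

definition coloured_graph :: "nat set \<Rightarrow> nat set set \<times> (nat \<times> nat) set set \<Rightarrow> bool" where
  "coloured_graph V G \<longleftrightarrow>
     partition_on V (fst G) \<and> (\<exists>E. E \<subseteq> F_V V \<and> partition_on E (snd G))"

definition pdCG :: "(nat \<Rightarrow> nat) \<Rightarrow> nat set \<Rightarrow> nat set set \<times> (nat \<times> nat) set set \<Rightarrow> bool" where
  "pdCG \<tau> V G \<longleftrightarrow> coloured_graph V G \<and>
     (\<forall>c\<in>fst G. (\<exists>i. c = {i}) \<or> (\<exists>i. c = {i, \<tau> i} \<and> i \<noteq> \<tau> i)) \<and>
     (\<forall>c\<in>snd G. (\<exists>e. c = {e}) \<or> (\<exists>e. c = {e, tau_edge \<tau> e} \<and> e \<noteq> tau_edge \<tau> e))"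

definition pdCGs :: "(nat \<Rightarrow> nat) \<Rightarrow> nat set \<Rightarrow> (nat set set \<times> (nat \<times> nat) set set) set" where
  "pdCGs \<tau> V = {G. pdCG \<tau> V G}"

end

theory Submission
  imports Defs
begin

definition goodQ :: "('a \<Rightarrow> 'a) \<Rightarrow> 'a set set \<Rightarrow> bool" where
  "goodQ \<sigma> Q \<longleftrightarrow> (\<forall>c\<in>Q. (\<exists>e. c = {e}) \<or> (\<exists>e. c = {e, \<sigma> e} \<and> e \<noteq> \<sigma> e))"

definition GS :: "bool \<Rightarrow> ('a \<Rightarrow> 'a) \<Rightarrow> 'a set \<Rightarrow> 'a set set set" where
  "GS full \<sigma> S = {Q. \<Union>Q \<subseteq> S \<and> (full \<longrightarrow> \<Union>Q = S) \<and> disjoint Q \<and> goodQ \<sigma> Q}"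

lemma goodQ_ne: "goodQ \<sigma> Q \<Longrightarrow> c \<in> Q \<Longrightarrow> c \<noteq> {}"
  unfolding goodQ_def by auto

lemma goodQ_subset: "goodQ \<sigma> Q \<Longrightarrow> Q' \<subseteq> Q \<Longrightarrow> goodQ \<sigma> Q'"
  unfolding goodQ_def by auto

lemma goodQ_Un: "goodQ \<sigma> Q \<Longrightarrow> goodQ \<sigma> Q' \<Longrightarrow> goodQ \<sigma> (Q \<union> Q')"
  unfolding goodQ_def by auto

lemma orbit_split:
  assumes inv: "\<forall>s\<in>S. \<sigma> s \<in> S \<and> \<sigma> (\<sigma> s) = s" and x: "x \<in> S"
    and g: "goodQ \<sigma> Q" and c: "c \<in> Q" and cS: "c \<subseteq> S"
  shows "c \<subseteq> S - {x, \<sigma> x} \<or> c \<subseteq> {x, \<sigma> x}"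
proof -
  from g c have "(\<exists>e. c = {e}) \<or> (\<exists>e. c = {e, \<sigma> e} \<and> e \<noteq> \<sigma> e)" unfolding goodQ_def by auto
  then show ?thesis
  proof
    assume "\<exists>e. c = {e}" then show ?thesis using cS by auto
  next
    assume "\<exists>e. c = {e, \<sigma> e} \<and> e \<noteq> \<sigma> e"
    then obtain e where e: "c = {e, \<sigma> e}" by auto
    have eS: "e \<in> S" using e cS by auto
    show ?thesis
    proof (cases "e = x \<or> e = \<sigma> x")
      case True then show ?thesis using e inv x by auto
    next
      case False
      have "\<sigma> e \<noteq> x"
      proof
        assume "\<sigma> e = x" then have "\<sigma> (\<sigma> e) = \<sigma> x" by simp
        then show False using inv eS False by simp
      qed
      moreover have "\<sigma> e \<noteq> \<sigma> x"
      proof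
        assume "\<sigma> e = \<sigma> x" then have "\<sigma> (\<sigma> e) = \<sigma> (\<sigma> x)" by simp
        then show False using inv eS x False by simp
      qed
      ultimately show ?thesis using e cS False by auto
    qed
  qed
qed

lemma GS_decomp:
  assumes inv: "\<forall>s\<in>S. \<sigma> s \<in> S \<and> \<sigma> (\<sigma> s) = s" and x: "x \<in> S"
  shows "bij_betw (\<lambda>(A, B). A \<union> B) (GS full \<sigma> (S - {x, \<sigma> x}) \<times> GS full \<sigma> {x, \<sigma> x}) (GS full \<sigma> S)"
proof -
  let ?O = "{x, \<sigma> x}"
  have OS: "?O \<subseteq> S" using inv x by auto
  have sepA: "A = {c \<in> A \<union> B. c \<subseteq> S - ?O}" and sepB: "B = {c \<in> A \<union> B. c \<subseteq> ?O}"
    if "A \<in> GS full \<sigma> (S - ?O)" "B \<in> GS full \<sigma> ?O" for A B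
  proof -
    have a1: "\<Union>A \<subseteq> S - ?O" "goodQ \<sigma> A" using that(1) by (simp_all add: GS_def)
    have b1: "\<Union>B \<subseteq> ?O" "goodQ \<sigma> B" using that(2) by (simp_all add: GS_def)
    have A1: "\<And>c. c \<in> A \<Longrightarrow> c \<subseteq> S - ?O \<and> c \<noteq> {}"
    proof
      fix c assume "c \<in> A" then show "c \<subseteq> S - ?O" using a1(1) by (meson Union_upper order_trans)
      show "c \<noteq> {}" using goodQ_ne[OF a1(2) \<open>c \<in> A\<close>] .
    qed
    have B1: "\<And>c. c \<in> B \<Longrightarrow> c \<subseteq> ?O \<and> c \<noteq> {}"
    proof
      fix c assume "c \<in> B" then show "c \<subseteq> ?O" using b1(1) by (meson Union_upper order_trans)
      show "c \<noteq> {}" using goodQ_ne[OF b1(2) \<open>c \<in> B\<close>] .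
    qed
    show "A = {c \<in> A \<union> B. c \<subseteq> S - ?O}"
    proof (intro set_eqI iffI)
      fix c assume "c \<in> {c \<in> A \<union> B. c \<subseteq> S - ?O}"
      then show "c \<in> A" using B1 by blast
    qed (use A1 in auto)
    show "B = {c \<in> A \<union> B. c \<subseteq> ?O}"
    proof (intro set_eqI iffI)
      fix c assume "c \<in> {c \<in> A \<union> B. c \<subseteq> ?O}"
      then show "c \<in> B" using A1 by blast
    qed (use B1 in auto)
  qed
  show ?thesis
  proof (rule bij_betw_imageI)
    show "inj_on (\<lambda>(A, B). A \<union> B) (GS full \<sigma> (S - ?O) \<times> GS full \<sigma> ?O)"
    proof (rule inj_onI, clarify)
      fix A B A' B'
      assume h: "A \<in> GS full \<sigma> (S - ?O)" "B \<in> GS full \<sigma> ?O" "A' \<in> GS full \<sigma> (S - ?O)" "B' \<in> GS full \<sigma> ?O"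
        "A \<union> B = A' \<union> B'"
      show "A = A' \<and> B = B'"
      proof
        show "A = A'" using sepA[OF h(1,2)] sepA[OF h(3,4)] h(5) by simp
        show "B = B'" using sepB[OF h(1,2)] sepB[OF h(3,4)] h(5) by simp
      qed
    qed
    show "(\<lambda>(A, B). A \<union> B) ` (GS full \<sigma> (S - ?O) \<times> GS full \<sigma> ?O) = GS full \<sigma> S"
    proof (intro equalityI subsetI)
      fix Q assume "Q \<in> (\<lambda>(A, B). A \<union> B) ` (GS full \<sigma> (S - ?O) \<times> GS full \<sigma> ?O)"
      then obtain P where P: "P \<in> GS full \<sigma> (S - ?O) \<times> GS full \<sigma> ?O" "Q = (\<lambda>(A, B). A \<union> B) P" by (rule imageE)
      obtain A B where AB: "P = (A, B)" by (cases P)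
      have Q: "Q = A \<union> B" and A: "A \<in> GS full \<sigma> (S - ?O)" and B: "B \<in> GS full \<sigma> ?O" using P AB by simp_all
      have Ad: "\<Union>A \<subseteq> S - ?O" "full \<longrightarrow> \<Union>A = S - ?O" "disjoint A" "goodQ \<sigma> A"
        using A by (simp_all add: GS_def)
      have Bd: "\<Union>B \<subseteq> ?O" "full \<longrightarrow> \<Union>B = ?O" "disjoint B" "goodQ \<sigma> B"
        using B by (simp_all add: GS_def)
      have "\<Union>A \<inter> \<Union>B = {}" using Ad(1) Bd(1) by blast
      then have "disjoint Q" unfolding Q using Ad(3) Bd(3) disjoint_union by blast
      moreover have "goodQ \<sigma> Q" unfolding Q using Ad(4) Bd(4) by (rule goodQ_Un)
      moreover have "\<Union>Q \<subseteq> S" using Ad(1) Bd(1) OS unfolding Q by blast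
      moreover have "full \<longrightarrow> \<Union>Q = S"
      proof
        assume full
        then have "\<Union>Q = (S - ?O) \<union> ?O" using Ad(2) Bd(2) unfolding Q by simp
        then show "\<Union>Q = S" using OS by blast
      qed
      ultimately show "Q \<in> GS full \<sigma> S" by (simp add: GS_def)
    next
      fix Q assume Q: "Q \<in> GS full \<sigma> S"
      have Qd: "\<Union>Q \<subseteq> S" "full \<longrightarrow> \<Union>Q = S" "disjoint Q" "goodQ \<sigma> Q"
        using Q by (simp_all add: GS_def)
      have sp: "c \<subseteq> S - ?O \<or> c \<subseteq> ?O" if c: "c \<in> Q" for c
      proof -
        have "c \<subseteq> S" using c Qd(1) by (meson Union_upper order_trans)
        then show ?thesis using orbit_split[OF inv x Qd(4) c] by simp
      qed
      let ?A = "{c \<in> Q. c \<subseteq> S - ?O}" and ?B = "{c \<in> Q. c \<subseteq> ?O}"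
      have QAB: "Q = ?A \<union> ?B"
      proof (intro equalityI subsetI)
        fix c assume "c \<in> Q" then show "c \<in> ?A \<union> ?B" using sp[of c] by simp
      qed blast
      have sub: "?A \<subseteq> Q" "?B \<subseteq> Q" by (rule Collect_restrict)+
      have dA: "disjoint ?A" "disjoint ?B" using pairwise_subset[OF Qd(3) sub(1)] pairwise_subset[OF Qd(3) sub(2)] .
      have gA: "goodQ \<sigma> ?A" "goodQ \<sigma> ?B" using goodQ_subset[OF Qd(4) sub(1)] goodQ_subset[OF Qd(4) sub(2)] .
      have uA: "\<Union>?A \<subseteq> S - ?O" "\<Union>?B \<subseteq> ?O" by (rule Union_least, simp)+
      have fA1: "\<Union>?A = S - ?O" if f: full
      proof (intro equalityI subsetI)
        fix s assume s: "s \<in> S - ?O"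
        then have "s \<in> \<Union>Q" using Qd(2) f by simp
        then obtain c where "c \<in> Q" "s \<in> c" by blast
        then show "s \<in> \<Union>?A" using sp s by blast
      qed (use uA in blast)
      have fA2: "\<Union>?B = ?O" if f: full
      proof (intro equalityI subsetI)
        fix s assume s: "s \<in> ?O"
        then have "s \<in> \<Union>Q" using Qd(2) f OS by auto
        then obtain c where "c \<in> Q" "s \<in> c" by blast
        then show "s \<in> \<Union>?B" using sp s by blast
      qed (use uA in blast)
      have inA: "?A \<in> GS full \<sigma> (S - ?O)" unfolding GS_def using dA(1) gA(1) fA1 uA(1) by simp
      have inB: "?B \<in> GS full \<sigma> ?O" unfolding GS_def using dA(2) gA(2) fA2 uA(2) by simp
      show "Q \<in> (\<lambda>(A, B). A \<union> B) ` (GS full \<sigma> (S - ?O) \<times> GS full \<sigma> ?O)"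
      proof (rule image_eqI[where x="(?A, ?B)"])
        show "Q = (\<lambda>(A, B). A \<union> B) (?A, ?B)" using QAB by simp
        show "(?A, ?B) \<in> GS full \<sigma> (S - ?O) \<times> GS full \<sigma> ?O" using inA inB by simp
      qed
    qed
  qed
qed


lemma GS_elem:
  assumes "Q \<in> GS full \<sigma> T" "c \<in> Q"
  shows "c \<subseteq> T" "c \<noteq> {}"
proof -
  have "\<Union>Q \<subseteq> T" "goodQ \<sigma> Q" using assms(1) by (simp_all add: GS_def)
  then show "c \<subseteq> T" "c \<noteq> {}" using assms(2) goodQ_ne by (meson Union_upper order_trans)+
qed

lemma GS_single_eq: "GS full \<sigma> {x} = (if full then {{{x}}} else {{}, {{x}}})"
proof (intro equalityI subsetI)
  fix Q assume Q: "Q \<in> GS full \<sigma> {x}"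
  have "Q \<subseteq> {{x}}"
  proof
    fix c assume "c \<in> Q"
    then have "c \<subseteq> {x}" "c \<noteq> {}" using GS_elem[OF Q] by auto
    then show "c \<in> {{x}}" by (simp add: subset_singleton_iff)
  qed
  then have "Q = {} \<or> Q = {{x}}" by (simp add: subset_singleton_iff)
  moreover have "full \<longrightarrow> \<Union>Q = {x}" using Q by (simp add: GS_def)
  ultimately show "Q \<in> (if full then {{{x}}} else {{}, {{x}}})" by auto
next
  fix Q assume "Q \<in> (if full then {{{x}}} else {{}, {{x}}})"
  then show "Q \<in> GS full \<sigma> {x}"
    by (cases full) (auto simp: GS_def goodQ_def)
qed

lemma card_GS_single: "card (GS full \<sigma> {x}) = (if full then 1 else 2)"
  by (simp add: GS_single_eq)

lemma sub2: "c \<subseteq> {x, y} \<Longrightarrow> c \<noteq> {} \<Longrightarrow> c = {x} \<or> c = {y} \<or> c = {x, y}"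
  by blast

lemma GS_pair_cases:
  assumes xy: "x \<noteq> y" and Q: "Q \<in> GS full \<sigma> {x, y}"
  shows "Q = {{x, y}} \<or> Q \<subseteq> {{x}, {y}}"
proof -
  have d: "disjoint Q" using Q by (simp add: GS_def)
  have cases: "c = {x} \<or> c = {y} \<or> c = {x, y}" if "c \<in> Q" for c
    using sub2[OF GS_elem(1)[OF Q that] GS_elem(2)[OF Q that]] .
  show ?thesis
  proof (cases "{x, y} \<in> Q")
    case True
    have allc: "c = {x, y}" if c: "c \<in> Q" for c
    proof (rule ccontr)
      assume ne: "c \<noteq> {x, y}"
      have "disjnt c {x, y}" by (rule pairwiseD(1)[OF d c True ne])
      then have "c \<inter> {x, y} = {}" by (simp only: disjnt_def)
      moreover have "c \<noteq> {}" "c \<subseteq> {x, y}" using GS_elem[OF Q c] by simp_all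
      ultimately show False by blast
    qed
    have "Q = {{x, y}}"
    proof (intro equalityI subsetI)
      fix c assume "c \<in> Q" then show "c \<in> {{x, y}}" using allc by simp
    qed (simp add: True)
    then show ?thesis by simp
  next
    case False
    have "Q \<subseteq> {{x}, {y}}"
    proof
      fix c assume c: "c \<in> Q"
      have "c \<noteq> {x, y}" using c False by metis
      then show "c \<in> {{x}, {y}}" using cases[OF c] by simp
    qed
    then show ?thesis by simp
  qed
qed

lemma pair_facts:
  assumes xy: "x \<noteq> y" and s: "\<sigma> x = y"
  shows "goodQ \<sigma> {{x, y}}" "goodQ \<sigma> {{x}, {y}}" "disjoint {{x}, {y}}"
proof -
  show "goodQ \<sigma> {{x, y}}" unfolding goodQ_def using xy s by auto
  show "goodQ \<sigma> {{x}, {y}}" unfolding goodQ_def by auto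
  show "disjoint {{x}, {y}}" using xy by (auto simp: pairwise_def disjnt_def)
qed

lemma GS_pair_False:
  assumes xy: "x \<noteq> y" and s: "\<sigma> x = y"
  shows "GS False \<sigma> {x, y} = insert {{x, y}} (Pow {{x}, {y}})"
proof (intro equalityI subsetI)
  fix Q assume "Q \<in> GS False \<sigma> {x, y}"
  then show "Q \<in> insert {{x, y}} (Pow {{x}, {y}})" using GS_pair_cases[OF xy] by blast
next
  fix Q assume Q: "Q \<in> insert {{x, y}} (Pow {{x}, {y}})"
  note pf = pair_facts[where \<sigma>=\<sigma> and x=x and y=y, OF xy s]
  show "Q \<in> GS False \<sigma> {x, y}"
  proof (cases "Q = {{x, y}}")
    case True
    then show ?thesis using pf by (simp add: GS_def)
  next
    case False
    then have sub: "Q \<subseteq> {{x}, {y}}" using Q by simp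
    have "\<Union>Q \<subseteq> {x, y}" using sub by blast
    moreover have "disjoint Q" by (rule pairwise_subset[OF pf(3) sub])
    moreover have "goodQ \<sigma> Q" by (rule goodQ_subset[OF pf(2) sub])
    ultimately show ?thesis by (simp add: GS_def)
  qed
qed

lemma GS_pair_True:
  assumes xy: "x \<noteq> y" and s: "\<sigma> x = y"
  shows "GS True \<sigma> {x, y} = {{{x, y}}, {{x}, {y}}}"
proof (intro equalityI subsetI)
  fix Q assume Q: "Q \<in> GS True \<sigma> {x, y}"
  have U: "\<Union>Q = {x, y}" using Q by (simp add: GS_def)
  show "Q \<in> {{{x, y}}, {{x}, {y}}}"
  proof (cases "Q = {{x, y}}")
    case True then show ?thesis by simp
  next
    case False
    then have sub: "Q \<subseteq> {{x}, {y}}" using GS_pair_cases[OF xy Q] by simp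
    have "x \<in> \<Union>Q" "y \<in> \<Union>Q" using U by simp_all
    then obtain c d where c: "c \<in> Q" "x \<in> c" and d: "d \<in> Q" "y \<in> d" by blast
    have "c = {x}" using c sub xy by blast
    moreover have "d = {y}" using d sub xy by blast
    ultimately have "{x} \<in> Q" "{y} \<in> Q" using c d by simp_all
    then have "Q = {{x}, {y}}" using sub by blast
    then show ?thesis by simp
  qed
next
  fix Q assume Q: "Q \<in> {{{x, y}}, {{x}, {y}}}"
  note pf = pair_facts[where \<sigma>=\<sigma> and x=x and y=y, OF xy s]
  show "Q \<in> GS True \<sigma> {x, y}"
  proof (cases "Q = {{x, y}}")
    case True
    then show ?thesis using pf by (simp add: GS_def)
  next
    case False
    then have "Q = {{x}, {y}}" using Q by simp
    then show ?thesis using pf by (simp add: GS_def insert_commute)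
  qed
qed

lemma card_two: "a \<noteq> b \<Longrightarrow> card {a, b} = 2"
  by simp

lemma card_GS_pair:
  assumes xy: "x \<noteq> y" and s: "\<sigma> x = y"
  shows "card (GS full \<sigma> {x, y}) = (if full then 2 else 5)"
proof (cases full)
  case True
  have ne: "{{x, y}} \<noteq> {{x}, {y}}"
  proof
    assume e: "{{x, y}} = {{x}, {y}}"
    have "{x} \<in> {{x}, {y}}" by simp
    then have "{x} \<in> {{x, y}}" by (subst e)
    then have "{x} = {x, y}" by simp
    then have "y \<in> {x}" by blast
    then show False using xy by simp
  qed
  have "card (GS full \<sigma> {x, y}) = card {{{x, y}}, {{x}, {y}}}"
    using True GS_pair_True[where \<sigma>=\<sigma> and x=x and y=y, OF xy s] by simp
  also have "\<dots> = 2" by (rule card_two[OF ne])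
  finally show ?thesis using True by simp
next
  case False
  have "{x} \<noteq> {y}" using xy by simp
  then have c2: "card {{x}, {y}} = 2" by (rule card_two)
  have fin: "finite (Pow {{x}, {y}})" by simp
  have nin: "{{x, y}} \<notin> Pow {{x}, {y}}"
  proof
    assume "{{x, y}} \<in> Pow {{x}, {y}}"
    then have "{x, y} \<in> {{x}, {y}}" by blast
    then have "{x, y} = {x} \<or> {x, y} = {y}" by blast
    then show False using xy by (auto simp: doubleton_eq_iff)
  qed
  have c4: "card (Pow {{x}, {y}}) = 4" using c2 by (simp add: card_Pow)
  have "card (GS full \<sigma> {x, y}) = card (insert {{x, y}} (Pow {{x}, {y}}))"
    using False GS_pair_False[where \<sigma>=\<sigma> and x=x and y=y, OF xy s] by simp
  also have "\<dots> = Suc (card (Pow {{x}, {y}}))" by (rule card_insert_disjoint[OF fin nin])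
  finally show ?thesis using False c4 by simp
qed


lemma GS_empty: "GS full \<sigma> {} = {{}}"
proof (intro equalityI subsetI)
  fix Q assume Q: "Q \<in> GS full \<sigma> {}"
  have "Q = {}"
  proof (rule ccontr)
    assume "Q \<noteq> {}" then obtain c where c: "c \<in> Q" by blast
    then show False using GS_elem[OF Q c] by simp
  qed
  then show "Q \<in> {{}}" by simp
next
  fix Q :: "'a set set" assume "Q \<in> {{}}"
  then show "Q \<in> GS full \<sigma> {}" by (simp add: GS_def goodQ_def)
qed

lemma GS_finite: "finite S \<Longrightarrow> finite (GS full \<sigma> S)"
proof -
  assume "finite S"
  have "GS full \<sigma> S \<subseteq> Pow (Pow S)" unfolding GS_def by blast
  then show ?thesis using \<open>finite S\<close> by (meson finite_Pow_iff finite_subset)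
qed

lemma GS_count:
  assumes "finite S" "\<forall>s\<in>S. \<sigma> s \<in> S \<and> \<sigma> (\<sigma> s) = s"
  shows "even (card (S - {s\<in>S. \<sigma> s = s})) \<and>
    card (GS full \<sigma> S) = (if full then 1 else 2) ^ card {s\<in>S. \<sigma> s = s} *
      (if full then 2 else 5) ^ (card (S - {s\<in>S. \<sigma> s = s}) div 2)"
  using assms
proof (induction "card S" arbitrary: S rule: less_induct)
  case less
  let ?a = "if full then 1 else 2 :: nat" and ?b = "if full then 2 else 5 :: nat"
  show ?case
  proof (cases "S = {}")
    case True
    then show ?thesis by (simp add: GS_empty)
  next
    case False
    then obtain x where x: "x \<in> S" by blast
    note inv = less.prems(2)
    define O' where "O' = {x, \<sigma> x}"
    define S' where "S' = S - O'"
    have OS: "O' \<subseteq> S" using inv x unfolding O'_def by auto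
    have inv': "\<forall>s\<in>S'. \<sigma> s \<in> S' \<and> \<sigma> (\<sigma> s) = s"
    proof
      fix s assume s: "s \<in> S'"
      then have sS: "s \<in> S" "s \<noteq> x" "s \<noteq> \<sigma> x" unfolding S'_def O'_def by auto
      have "\<sigma> s \<noteq> x"
      proof
        assume "\<sigma> s = x" then have "\<sigma> (\<sigma> s) = \<sigma> x" by simp
        then show False using inv sS by simp
      qed
      moreover have "\<sigma> s \<noteq> \<sigma> x"
      proof
        assume "\<sigma> s = \<sigma> x" then have "\<sigma> (\<sigma> s) = \<sigma> (\<sigma> x)" by simp
        then show False using inv sS x by simp
      qed
      ultimately show "\<sigma> s \<in> S' \<and> \<sigma> (\<sigma> s) = s" using inv sS unfolding S'_def O'_def by auto
    qed
    have finS': "finite S'" using less.prems(1) unfolding S'_def by simp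
    have "card S' < card S" unfolding S'_def
      by (rule psubset_card_mono[OF less.prems(1)]) (use x in \<open>auto simp: O'_def\<close>)
    note IH = less.hyps[OF this finS' inv']
    have bij: "bij_betw (\<lambda>(A, B). A \<union> B) (GS full \<sigma> S' \<times> GS full \<sigma> O') (GS full \<sigma> S)"
      unfolding S'_def O'_def by (rule GS_decomp[OF inv x])
    have cardS: "card (GS full \<sigma> S) = card (GS full \<sigma> S') * card (GS full \<sigma> O')"
      using bij_betw_same_card[OF bij] by (simp add: card_cartesian_product)
    let ?F = "{s\<in>S. \<sigma> s = s}" and ?F' = "{s\<in>S'. \<sigma> s = s}"
    have finF: "finite ?F" "finite (S - ?F)" using less.prems(1) by simp_all
    show ?thesis
    proof (cases "\<sigma> x = x")
      case True
      have O1: "O' = {x}" unfolding O'_def using True by simp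
      have cO: "card (GS full \<sigma> O') = ?a" unfolding O1 by (rule card_GS_single)
      have F: "?F = insert x ?F'" using True x unfolding S'_def O1 by auto
      have xF': "x \<notin> ?F'" unfolding S'_def O1 by simp
      have cF: "card ?F = Suc (card ?F')" unfolding F
        by (rule card_insert_disjoint) (use finS' xF' in simp_all)
      have N: "S' - ?F' = S - ?F" using True x unfolding S'_def O1 by auto
      show ?thesis using IH cardS cO cF N by (simp add: power_Suc)
    next
      case False
      have fx: "\<sigma> (\<sigma> x) = x" using inv x by simp
      have xs: "x \<noteq> \<sigma> x" using False by simp
      have cO: "card (GS full \<sigma> O') = ?b" unfolding O'_def
        by (rule card_GS_pair[where \<sigma>=\<sigma> and x=x and y="\<sigma> x", OF xs refl])
      have F: "?F' = ?F" using False fx unfolding S'_def O'_def by auto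
      have N: "S' - ?F' = (S - ?F) - O'" using F unfolding S'_def by auto
      have ON: "O' \<subseteq> S - ?F" using OS False fx unfolding O'_def by auto
      have cO2: "card O' = 2" unfolding O'_def using False by (simp add: card_two)
      have finO: "finite O'" unfolding O'_def by simp
      have "card (S' - ?F') = card (S - ?F) - card O'" unfolding N
        by (rule card_Diff_subset[OF finO ON])
      moreover have "card O' \<le> card (S - ?F)" by (rule card_mono[OF finF(2) ON])
      ultimately have cN: "card (S - ?F) = card (S' - ?F') + 2" using cO2 by simp
      obtain k where k: "card (S' - ?F') = 2 * k" using IH by (metis evenE)
      have e1: "card (S - ?F) = 2 * Suc k" using cN k by simp
      have cS': "card (GS full \<sigma> S') = ?a ^ card ?F * ?b ^ k" using IH k F by simp
      have "card (GS full \<sigma> S) = ?a ^ card ?F * ?b ^ Suc k" using cardS cS' cO by simp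
      then show ?thesis using e1 by simp
    qed
  qed
qed


lemma card_F_V: "card (F_V {1..n}) = n choose 2"
proof (induction n)
  case 0
  have "F_V {1..0::nat} = {}" by (auto simp: F_V_def)
  then show ?case by simp
next
  case (Suc n)
  have eq: "F_V {1..Suc n} = F_V {1..n} \<union> (\<lambda>i. (i, Suc n)) ` {1..n}"
    by (auto simp: F_V_def)
  have fin: "finite (F_V {1..n})" by (rule finite_subset[of _ "{1..n} \<times> {1..n}"]) (auto simp: F_V_def)
  have dis: "F_V {1..n} \<inter> (\<lambda>i. (i, Suc n)) ` {1..n} = {}" by (auto simp: F_V_def)
  have ci: "card ((\<lambda>i. (i, Suc n)) ` {1..n}) = n" by (simp add: card_image inj_on_def)
  have "card (F_V {1..Suc n}) = (n choose 2) + n"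
    unfolding eq using card_Un_disjoint[OF fin _ dis] ci Suc.IH by simp
  also have "\<dots> = Suc n choose 2" by (simp add: numeral_2_eq_2)
  finally show ?case .
qed

lemma arith_final:
  fixes p :: nat
  assumes "even p"
  shows "2 ^ (p div 2) * 5 ^ (((p choose 2) - p div 2) div 2) =
    (\<Sum>i = 0..p * (p - 2) div 4. (p * (p - 2) div 4 choose i) * 2 ^ ((p choose 2) - 2 * i))"
proof -
  obtain h where p: "p = 2 * h" using assms by (rule evenE)
  define m where "m = h * (h - 1)"
  have pd: "p div 2 = h" using p by simp
  have mm: "p * (p - 2) div 4 = m"
  proof -
    have "p * (p - 2) = 4 * (h * (h - 1))" unfolding p by (cases h) (simp_all add: algebra_simps)
    then show ?thesis unfolding m_def by simp
  qed
  have C: "p choose 2 = 2 * m + h"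
  proof -
    have "p * (p - 1) = 2 * (2 * m + h)" unfolding p m_def by (cases h) (simp_all add: algebra_simps)
    then show ?thesis by (simp add: choose_two)
  qed
  have "(\<Sum>i = 0..m. (m choose i) * 2 ^ ((p choose 2) - 2 * i))
      = (\<Sum>i = 0..m. 2 ^ h * ((m choose i) * 1 ^ i * 4 ^ (m - i)))"
  proof (rule sum.cong)
    fix i assume "i \<in> {0..m}"
    then have im: "i \<le> m" by simp
    have "(p choose 2) - 2 * i = h + 2 * (m - i)" using C im by simp
    then have "(2::nat) ^ ((p choose 2) - 2 * i) = 2 ^ h * 4 ^ (m - i)"
      by (simp add: power_add power_mult)
    then show "(m choose i) * 2 ^ ((p choose 2) - 2 * i) = 2 ^ h * ((m choose i) * 1 ^ i * 4 ^ (m - i))"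
      by simp
  qed simp
  also have "\<dots> = 2 ^ h * (\<Sum>i\<le>m. (m choose i) * 1 ^ i * 4 ^ (m - i))"
    by (simp add: sum_distrib_left atLeast0AtMost)
  also have "(\<Sum>i\<le>m. (m choose i) * 1 ^ i * 4 ^ (m - i)) = (1 + 4 :: nat) ^ m"
    using binomial_ring[of "1::nat" 4 m] by simp
  finally have S: "(\<Sum>i = 0..m. (m choose i) * 2 ^ ((p choose 2) - 2 * i)) = 2 ^ h * 5 ^ m" by simp
  have "((p choose 2) - p div 2) div 2 = m" using C pd by simp
  then show ?thesis using S mm pd by simp
qed


lemma twin_facts:
  assumes tp: "twin_pairing V \<tau>"
  shows "\<forall>i\<in>V. \<tau> i \<in> V \<and> \<tau> (\<tau> i) = i" "\<forall>i\<in>V. \<tau> i \<noteq> i"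
proof -
  show inv: "\<forall>i\<in>V. \<tau> i \<in> V \<and> \<tau> (\<tau> i) = i" using tp by (simp add: twin_pairing_def)
  obtain L R where LR: "L \<union> R = V" "L \<inter> R = {}" "\<tau> ` L = R" using tp by (auto simp: twin_pairing_def)
  show "\<forall>i\<in>V. \<tau> i \<noteq> i"
  proof (intro ballI notI)
    fix i assume i: "i \<in> V" and f: "\<tau> i = i"
    show False
    proof (cases "i \<in> L")
      case True
      then have "\<tau> i \<in> R" using LR(3) by blast
      then show False using f True LR(2) by auto
    next
      case False
      then have "i \<in> R" using i LR(1) by blast
      then obtain l where l: "l \<in> L" "i = \<tau> l" using LR(3) by blast
      have "l \<in> V" using l LR(1) by blast
      then have "\<tau> i = l" using l inv by simp
      then show False using f l False by simp
    qed
  qed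
qed

lemma tau_edge_inv:
  assumes inv: "\<forall>i\<in>V. \<tau> i \<in> V \<and> \<tau> (\<tau> i) = i"
  shows "\<forall>e\<in>F_V V. tau_edge \<tau> e \<in> F_V V \<and> tau_edge \<tau> (tau_edge \<tau> e) = e"
proof
  fix e assume e: "e \<in> F_V V"
  obtain i j where ij: "e = (i, j)" "i \<in> V" "j \<in> V" "i < j" using e by (auto simp: F_V_def)
  have ne: "\<tau> i \<noteq> \<tau> j"
  proof
    assume "\<tau> i = \<tau> j" then have "\<tau> (\<tau> i) = \<tau> (\<tau> j)" by simp
    then show False using inv ij by simp
  qed
  have V: "\<tau> i \<in> V" "\<tau> j \<in> V" "\<tau> (\<tau> i) = i" "\<tau> (\<tau> j) = j" using inv ij by auto
  show "tau_edge \<tau> e \<in> F_V V \<and> tau_edge \<tau> (tau_edge \<tau> e) = e"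
  proof (cases "\<tau> i < \<tau> j")
    case True
    then show ?thesis using ij V by (simp add: tau_edge_def F_V_def min_def max_def)
  next
    case False
    then have "\<tau> j < \<tau> i" using ne by simp
    then show ?thesis using ij V by (simp add: tau_edge_def F_V_def min_def max_def)
  qed
qed

lemma card_half:
  fixes V :: "nat set"
  assumes fin: "finite V" and inv: "\<forall>i\<in>V. \<tau> i \<in> V \<and> \<tau> (\<tau> i) = i" and nf: "\<forall>i\<in>V. \<tau> i \<noteq> i"
  shows "card V = 2 * card {i\<in>V. i < \<tau> i}"
proof -
  let ?A = "{i\<in>V. i < \<tau> i}" and ?B = "{i\<in>V. \<tau> i < i}"
  have U: "V = ?A \<union> ?B" using nf by (auto simp: neq_iff)
  have D: "?A \<inter> ?B = {}" by auto
  have img: "\<tau> ` ?A = ?B"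
  proof (intro equalityI subsetI)
    fix b assume "b \<in> \<tau> ` ?A"
    then obtain a where a: "a \<in> ?A" "b = \<tau> a" by blast
    then show "b \<in> ?B" using inv by auto
  next
    fix b assume b: "b \<in> ?B"
    then have "\<tau> b \<in> ?A" "\<tau> (\<tau> b) = b" using inv by auto
    then show "b \<in> \<tau> ` ?A" by (metis imageI)
  qed
  have inj: "inj_on \<tau> ?A"
  proof (rule inj_onI)
    fix a b assume "a \<in> ?A" "b \<in> ?A" "\<tau> a = \<tau> b"
    then show "a = b" using inv by (metis (no_types, lifting) mem_Collect_eq)
  qed
  have "card ?B = card ?A" using card_image[OF inj] img by simp
  moreover have "card V = card ?A + card ?B"
    using U D fin by (metis (no_types, lifting) card_Un_disjoint finite_Un)
  ultimately show ?thesis by simp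
qed

lemma fix_edges:
  assumes inv: "\<forall>i\<in>V. \<tau> i \<in> V \<and> \<tau> (\<tau> i) = i" and nf: "\<forall>i\<in>V. \<tau> i \<noteq> i"
  shows "{e\<in>F_V V. tau_edge \<tau> e = e} = (\<lambda>i. (i, \<tau> i)) ` {i\<in>V. i < \<tau> i}"
proof (intro equalityI subsetI)
  fix e assume e: "e \<in> {e\<in>F_V V. tau_edge \<tau> e = e}"
  obtain i j where ij: "e = (i, j)" "i \<in> V" "j \<in> V" "i < j" using e by (auto simp: F_V_def)
  have te: "min (\<tau> i) (\<tau> j) = i" "max (\<tau> i) (\<tau> j) = j" using e ij by (simp_all add: tau_edge_def)
  have "\<tau> i \<noteq> i" using nf ij by simp
  then have "\<not> \<tau> i \<le> \<tau> j" using te by (auto simp: min_def)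
  then have "\<tau> j = i" "\<tau> i = j" using te by (simp_all add: min_def max_def)
  then show "e \<in> (\<lambda>i. (i, \<tau> i)) ` {i\<in>V. i < \<tau> i}" using ij by auto
next
  fix e assume "e \<in> (\<lambda>i. (i, \<tau> i)) ` {i\<in>V. i < \<tau> i}"
  then obtain i where i: "e = (i, \<tau> i)" "i \<in> V" "i < \<tau> i" by blast
  then show "e \<in> {e\<in>F_V V. tau_edge \<tau> e = e}" using inv
    by (simp add: F_V_def tau_edge_def min_def max_def)
qed

lemma pdCGs_eq: "pdCGs \<tau> V = GS True \<tau> V \<times> GS False (tau_edge \<tau>) (F_V V)"
proof (intro equalityI subsetI)
  fix G assume "G \<in> pdCGs \<tau> V"
  then have G: "pdCG \<tau> V G" by (simp add: pdCGs_def)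
  obtain P Q where PQ: "G = (P, Q)" by (cases G)
  have "partition_on V P" and gP: "goodQ \<tau> P" using G PQ by (simp_all add: pdCG_def coloured_graph_def goodQ_def)
  then have "P \<in> GS True \<tau> V" by (simp add: partition_on_def GS_def)
  moreover obtain E where E: "E \<subseteq> F_V V" "partition_on E Q" using G PQ by (auto simp: pdCG_def coloured_graph_def)
  moreover have gQ: "goodQ (tau_edge \<tau>) Q" using G PQ by (simp add: pdCG_def goodQ_def)
  ultimately show "G \<in> GS True \<tau> V \<times> GS False (tau_edge \<tau>) (F_V V)"
    using PQ by (simp add: partition_on_def GS_def)
next
  fix G assume G: "G \<in> GS True \<tau> V \<times> GS False (tau_edge \<tau>) (F_V V)"
  obtain P Q where PQ: "G = (P, Q)" by (cases G)
  have P: "\<Union>P = V" "disjoint P" "goodQ \<tau> P" using G PQ by (simp_all add: GS_def)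
  have Q: "\<Union>Q \<subseteq> F_V V" "disjoint Q" "goodQ (tau_edge \<tau>) Q" using G PQ by (simp_all add: GS_def)
  have "{} \<notin> P" using goodQ_ne[OF P(3)] by blast
  then have pP: "partition_on V P" using P by (simp add: partition_on_def)
  have "{} \<notin> Q" using goodQ_ne[OF Q(3)] by blast
  then have pQ: "partition_on (\<Union>Q) Q" using Q by (simp add: partition_on_def)
  have "coloured_graph V G" unfolding coloured_graph_def PQ using pP pQ Q(1) by auto
  then show "G \<in> pdCGs \<tau> V" using P(3) Q(3) PQ by (simp add: pdCGs_def pdCG_def goodQ_def)
qed

theorem mainTheorem9:
  fixes p :: nat and \<tau> :: "nat \<Rightarrow> nat"
  assumes "even p"
    and "twin_pairing {1..p} \<tau>"
  shows "card (pdCGs \<tau> {1..p}) =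
    2 ^ (p div 2) *
    (\<Sum>i = 0..p * (p - 2) div 4. (p * (p - 2) div 4 choose i) * 2 ^ ((p choose 2) - 2 * i))"
proof -
  let ?V = "{1..p}"
  note tf = twin_facts[OF assms(2)]
  have finV: "finite ?V" by simp
  have finE: "finite (F_V ?V)" by (rule finite_subset[of _ "?V \<times> ?V"]) (auto simp: F_V_def)
  have half: "p = 2 * card {i\<in>?V. i < \<tau> i}" using card_half[OF finV tf] by simp
  have c1: "card (GS True \<tau> ?V) = 2 ^ (p div 2)"
  proof -
    have e: "{s\<in>?V. \<tau> s = s} = {}" using tf(2) by auto
    show ?thesis using GS_count[OF finV tf(1), of True, unfolded e] by simp
  qed
  let ?F = "{e\<in>F_V ?V. tau_edge \<tau> e = e}"
  have cF: "card ?F = p div 2"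
  proof -
    have "inj_on (\<lambda>i. (i, \<tau> i)) {i\<in>?V. i < \<tau> i}" by (rule inj_onI) simp
    then have "card ?F = card {i\<in>?V. i < \<tau> i}" unfolding fix_edges[OF tf] by (rule card_image)
    then show ?thesis using half by simp
  qed
  have cN: "card (F_V ?V - ?F) = (p choose 2) - p div 2"
    using card_Diff_subset[of ?F "F_V ?V"] finE cF card_F_V[of p] by (simp add: finite_subset)
  have c2: "card (GS False (tau_edge \<tau>) (F_V ?V)) = 2 ^ (p div 2) * 5 ^ (((p choose 2) - p div 2) div 2)"
    using GS_count[OF finE tau_edge_inv[OF tf(1)], of False] cF cN by simp
  have "card (pdCGs \<tau> ?V) = 2 ^ (p div 2) * (2 ^ (p div 2) * 5 ^ (((p choose 2) - p div 2) div 2))"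
    unfolding pdCGs_eq card_cartesian_product c1 c2 ..
  then show ?thesis using arith_final[OF assms(1)] by simp
qed

end
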